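(* In the setting of the context, suppose Condition I holds: $ZR^i\in L^1$ for all $i\in\{1,\dots,d\}$ and all $Z\in\mathcal{Q}$. Then the set $C_{\mathcal{Q}}:=\{\mathbb{E}[-Z(R-r\mathbf{1})]:Z\in\mathcal{Q}\}$ is a convex subset of $\mathbb{R}^d$, and for every $\pi\in\mathbb{R}^d$, $\rho(X_\pi)=\sup_{c\in C_{\mathcal{Q}}}\pi\cdot c$. Moreover, $\rho$ satisfies the Fatou property on $\mathcal{X}=\{X_\pi:\pi\in\mathbb{R}^d\}$: if $X_n,X\in\mathcal{X}$, $X_n\to X$ a.s. and $|X_n|\le Y$ a.s. for some $Y\in L$, then $\rho(X)\le\liminf_n\rho(X_n)$.
   Context: Let $(\Omega,\mathcal{F},\mathbb{P})$ be a probability space and a market: riskless asset $S^0_0=1$, $S^0_1=1+r$, $r>-1$; risky assets $S^1,\dots,S^d$ with constants $S^i_0>0$ and real-valued $\mathcal{F}$-measurable $S^i_1$; returns $R^i:=(S^i_1-S^i_0)/S^i_0$, $R=(R^1,\dots,R^d)$. Standing assumptions: nonredundancy (if $\theta\in\mathbb{R}^{1+d}$ with $\sum_{i=0}^d\theta^iS^i_t=0$ a.s. for $t\in\{0,1\}$ then $\theta=0$), $R^i\in L^1$, $\mathbb{E}[R^i]\ne r$ for some $i$. Excess return: $X_\pi:=\pi\cdot(R-r\mathbf{1})$. $L$ is a Riesz space with $L^\infty\subset L\subset L^1$ containing all $X_\pi$. $\mathcal{D}:=\{Z\in L^1:Z\ge0,\mathbb{E}[Z]=1\}$; $\mathcal{Q}\subset\mathcal{D}$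 is convex with $1\in\mathcal{Q}$ and $\rho(X)=\sup_{Z\in\mathcal{Q}}\mathbb{E}[-ZX]$ on $L$, where $\mathbb{E}[-ZX]:=\mathbb{E}[ZX^-]-\mathbb{E}[ZX^+]$ with $\mathbb{E}[-ZX]=\infty$ if $\mathbb{E}[ZX^-]=\infty$. *)

theory Defs
  imports "HOL-Probability.Probability"
begin

text \<open>One-period market with d risky assets; the index type 'd (finite) plays the role of {1..d}.\<close>

definition returns :: "real^'d \<Rightarrow> ('a \<Rightarrow> real^'d) \<Rightarrow> 'a \<Rightarrow> real^'d" where
  "returns S0 S1 = (\<lambda>\<omega>. \<chi> i. (S1 \<omega> $ i - S0 $ i) / S0 $ i)"

definition excess_return :: "real \<Rightarrow> ('a \<Rightarrow> real^'d) \<Rightarrow> real^'d \<Rightarrow> 'a \<Rightarrow> real" where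
  "excess_return r R \<pi> = (\<lambda>\<omega>. \<pi> \<bullet> (R \<omega> - (\<chi> i. r)))"

text \<open>Nonredundancy of the assets (S^0_0 = 1, S^0_1 = 1 + r).\<close>
definition nonredundant :: "'a measure \<Rightarrow> real \<Rightarrow> real^'d \<Rightarrow> ('a \<Rightarrow> real^'d) \<Rightarrow> bool" where
  "nonredundant M r S0 S1 \<longleftrightarrow>
     (\<forall>(\<theta>0::real) (\<theta>::real^'d).
        \<theta>0 * 1 + \<theta> \<bullet> S0 = 0 \<and> (AE \<omega> in M. \<theta>0 * (1 + r) + \<theta> \<bullet> S1 \<omega> = 0)
        \<longrightarrow> \<theta>0 = 0 \<and> \<theta> = 0)"

definition riesz_between_Linf_L1 :: "'a measure \<Rightarrow> ('a \<Rightarrow> real) set \<Rightarrow> bool" where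
  "riesz_between_Linf_L1 M L \<longleftrightarrow>
     (\<forall>f\<in>L. integrable M f) \<and>
     (\<forall>f. f \<in> borel_measurable M \<and> (\<exists>C. AE x in M. \<bar>f x\<bar> \<le> C) \<longrightarrow> f \<in> L) \<and>
     (\<forall>f\<in>L. \<forall>g\<in>L. (\<lambda>x. f x + g x) \<in> L) \<and>
     (\<forall>f\<in>L. \<forall>c::real. (\<lambda>x. c * f x) \<in> L) \<and>
     (\<forall>f\<in>L. \<forall>g\<in>L. (\<lambda>x. max (f x) (g x)) \<in> L)"

definition densities :: "'a measure \<Rightarrow> ('a \<Rightarrow> real) set" where
  "densities M = {Z. integrable M Z \<and> (AE x in M. Z x \<ge> 0) \<and> integral\<^sup>L M Z = 1}"

definition neg_expect :: "'a measure \<Rightarrow> ('a \<Rightarrow> real) \<Rightarrow> ('a \<Rightarrow> real) \<Rightarrow> ereal" where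
  "neg_expect M Z X =
     (let a = (\<integral>\<^sup>+ x. ennreal (Z x * max 0 (- X x)) \<partial>M);
          b = (\<integral>\<^sup>+ x. ennreal (Z x * max 0 (X x)) \<partial>M)
      in if a = \<infinity> then \<infinity> else enn2ereal a - enn2ereal b)"

definition rho :: "'a measure \<Rightarrow> ('a \<Rightarrow> real) set \<Rightarrow> ('a \<Rightarrow> real) \<Rightarrow> ereal" where
  "rho M Q X = (SUP Z\<in>Q. neg_expect M Z X)"

text \<open>C_Q = {E[-Z(R - r 1)] : Z \<in> Q} (ordinary integrals under Condition I).\<close>
definition C_set :: "'a measure \<Rightarrow> ('a \<Rightarrow> real) set \<Rightarrow> real \<Rightarrow> ('a \<Rightarrow> real^'d) \<Rightarrow> (real^'d) set" where
  "C_set M Q r R = (\<lambda>Z. \<chi> i. integral\<^sup>L M (\<lambda>x. - (Z x * (R x $ i - r)))) ` Q"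

end

theory Submission
  imports Defs
begin

lemma er_sum: "excess_return r R v \<omega> = (\<Sum>i\<in>UNIV. v$i * (R \<omega> $ i - r))"
  unfolding excess_return_def inner_vec_def by simp

lemma er_diff: "excess_return r R v \<omega> - excess_return r R w \<omega> = excess_return r R (v - w) \<omega>"
  unfolding excess_return_def by (simp add: inner_diff_left)

lemma er_scale: "excess_return r R (c *\<^sub>R v) \<omega> = c * excess_return r R v \<omega>"
  unfolding excess_return_def by simp

lemma neg_expect_int:
  assumes "integrable M (\<lambda>x. Z x * X x)" "AE x in M. Z x \<ge> 0"
    "X \<in> borel_measurable M" "Z \<in> borel_measurable M"
  shows "neg_expect M Z X = ereal (\<integral>x. - (Z x * X x) \<partial>M)"
proof -
  let ?f = "\<lambda>x. Z x * max 0 (- X x)" and ?g = "\<lambda>x. Z x * max 0 (X x)"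
  have fi: "integrable M ?f"
    by (rule Bochner_Integration.integrable_bound[OF assms(1)])
       (use assms(3,4) in \<open>auto simp: abs_mult intro!: mult_left_mono\<close>)
  have gi: "integrable M ?g"
    by (rule Bochner_Integration.integrable_bound[OF assms(1)])
       (use assms(3,4) in \<open>auto simp: abs_mult intro!: mult_left_mono\<close>)
  have f0: "AE x in M. 0 \<le> ?f x" using assms(2) by eventually_elim simp
  have g0: "AE x in M. 0 \<le> ?g x" using assms(2) by eventually_elim simp
  have a: "(\<integral>\<^sup>+ x. ennreal (?f x) \<partial>M) = ennreal (integral\<^sup>L M ?f)"
    by (rule nn_integral_eq_integral[OF fi f0])
  have b: "(\<integral>\<^sup>+ x. ennreal (?g x) \<partial>M) = ennreal (integral\<^sup>L M ?g)"
    by (rule nn_integral_eq_integral[OF gi g0])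
  have fn: "integral\<^sup>L M ?f \<ge> 0" by (rule integral_nonneg_AE[OF f0])
  have gn: "integral\<^sup>L M ?g \<ge> 0" by (rule integral_nonneg_AE[OF g0])
  have eq: "(\<lambda>x. - (Z x * X x)) = (\<lambda>x. ?f x - ?g x)"
    by (auto simp: max_def algebra_simps)
  have "neg_expect M Z X = ereal (integral\<^sup>L M ?f) - ereal (integral\<^sup>L M ?g)"
    unfolding neg_expect_def Let_def a b using fn gn by (simp add: enn2ereal_ennreal)
  also have "\<dots> = ereal (\<integral>x. ?f x - ?g x \<partial>M)" using fi gi by simp
  finally show ?thesis using eq by simp
qed

theorem proposition4p3:
  fixes M :: "'a measure" and r :: real and S0 :: "real^'d" and S1 :: "'a \<Rightarrow> real^'d"
    and L :: "('a \<Rightarrow> real) set" and Q :: "('a \<Rightarrow> real) set"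
  assumes "prob_space M"
    and "r > -1"
    and "\<forall>i. S0 $ i > 0"
    and "\<forall>i. (\<lambda>\<omega>. S1 \<omega> $ i) \<in> borel_measurable M"
    and "nonredundant M r S0 S1"
    and "\<forall>i. integrable M (\<lambda>\<omega>. returns S0 S1 \<omega> $ i)"
    and "\<exists>i. integral\<^sup>L M (\<lambda>\<omega>. returns S0 S1 \<omega> $ i) \<noteq> r"
    and "riesz_between_Linf_L1 M L"
    and "\<forall>\<pi>. excess_return r (returns S0 S1) \<pi> \<in> L"
    and "Q \<subseteq> densities M"
    and "\<forall>Z1\<in>Q. \<forall>Z2\<in>Q. \<forall>t::real. 0 \<le> t \<and> t \<le> 1 \<longrightarrow> (\<lambda>x. t * Z1 x + (1 - t) * Z2 x) \<in> Q"
    and "(\<lambda>_. 1) \<in> Q"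
    and condI: "\<forall>Z\<in>Q. \<forall>i. integrable M (\<lambda>\<omega>. Z \<omega> * returns S0 S1 \<omega> $ i)"
  shows "convex (C_set M Q r (returns S0 S1))
    \<and> (\<forall>\<pi>. rho M Q (excess_return r (returns S0 S1) \<pi>)
            = (SUP c\<in>C_set M Q r (returns S0 S1). ereal (\<pi> \<bullet> c)))
    \<and> (\<forall>(\<pi>s :: nat \<Rightarrow> real^'d) \<pi> Y.
          Y \<in> L
          \<longrightarrow> (AE \<omega> in M. (\<lambda>n. excess_return r (returns S0 S1) (\<pi>s n) \<omega>)
                             \<longlonglongrightarrow> excess_return r (returns S0 S1) \<pi> \<omega>)
          \<longrightarrow> (\<forall>n. AE \<omega> in M. \<bar>excess_return r (returns S0 S1) (\<pi>s n) \<omega>\<bar> \<le> Y \<omega>)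
          \<longrightarrow> rho M Q (excess_return r (returns S0 S1) \<pi>)
              \<le> liminf (\<lambda>n. rho M Q (excess_return r (returns S0 S1) (\<pi>s n))))"
proof -
  interpret P: prob_space M by fact
  define R where "R = returns S0 S1"
  define X where "X = excess_return r R"
  define cZ :: "('a \<Rightarrow> real) \<Rightarrow> real^'d" where
    "cZ = (\<lambda>Z. \<chi> i. integral\<^sup>L M (\<lambda>x. - (Z x * (R x $ i - r))))"
  have Cdef: "C_set M Q r R = cZ ` Q" unfolding C_set_def cZ_def by simp
  have Ri: "integrable M (\<lambda>\<omega>. R \<omega> $ i)" for i using assms(6) R_def by simp
  have Di: "integrable M (\<lambda>\<omega>. R \<omega> $ i - r)" for i using Ri by simp
  have Xsum: "X v = (\<lambda>\<omega>. \<Sum>i\<in>UNIV. v$i * (R \<omega> $ i - r))" for v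
    unfolding X_def by (rule ext, rule er_sum)
  have Xint: "integrable M (X v)" for v
    unfolding Xsum using Di by (intro Bochner_Integration.integrable_sum Bochner_Integration.integrable_mult_right) auto
  have Xmeas: "X v \<in> borel_measurable M" for v using Xint by auto
  have Zprops: "integrable M Z" "AE x in M. Z x \<ge> 0" "integral\<^sup>L M Z = 1" if "Z \<in> Q" for Z
    using that assms(10) unfolding densities_def by auto
  have ZD: "integrable M (\<lambda>\<omega>. Z \<omega> * (R \<omega> $ i - r))" if "Z \<in> Q" for Z i
  proof -
    have "integrable M (\<lambda>\<omega>. Z \<omega> * R \<omega> $ i - r * Z \<omega>)"
      using condI that Zprops(1)[OF that] R_def by auto
    then show ?thesis by (simp add: algebra_simps)
  qed
  have key: "neg_expect M Z (X v) = ereal (v \<bullet> cZ Z)" if "Z \<in> Q" for Z v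
  proof -
    have eqf: "(\<lambda>x. Z x * X v x) = (\<lambda>x. \<Sum>i\<in>UNIV. v$i * (Z x * (R x $ i - r)))"
      unfolding Xsum by (auto simp: sum_distrib_left algebra_simps)
    have int: "integrable M (\<lambda>x. Z x * X v x)"
      unfolding eqf using ZD[OF that] by (intro Bochner_Integration.integrable_sum Bochner_Integration.integrable_mult_right) auto
    have "neg_expect M Z (X v) = ereal (\<integral>x. - (Z x * X v x) \<partial>M)"
      using neg_expect_int[OF int Zprops(2)[OF that] Xmeas] Zprops(1)[OF that] by auto
    also have "(\<integral>x. - (Z x * X v x) \<partial>M) = (\<integral>x. (\<Sum>i\<in>UNIV. v$i * (- (Z x * (R x $ i - r)))) \<partial>M)"
    proof (intro arg_cong[where f="integral\<^sup>L M"] ext)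
      fix x show "- (Z x * X v x) = (\<Sum>i\<in>UNIV. v$i * (- (Z x * (R x $ i - r))))"
        using fun_cong[OF eqf, of x] by (simp add: sum_negf)
    qed
    also have "\<dots> = (\<Sum>i\<in>UNIV. v$i * integral\<^sup>L M (\<lambda>x. - (Z x * (R x $ i - r))))"
      using ZD[OF that] by (subst Bochner_Integration.integral_sum) auto
    also have "\<dots> = v \<bullet> cZ Z" unfolding cZ_def inner_vec_def by simp
    finally show ?thesis .
  qed
  have conv: "convex (cZ ` Q)"
    unfolding convex_def
  proof (intro ballI allI impI)
    fix c1 c2 and u v :: real
    assume c1: "c1 \<in> cZ ` Q" and c2: "c2 \<in> cZ ` Q" and uv: "0 \<le> u" "0 \<le> v" "u + v = 1"
    obtain Z1 Z2 where Z: "Z1 \<in> Q" "Z2 \<in> Q" "c1 = cZ Z1" "c2 = cZ Z2" using c1 c2 by auto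
    define Z3 where "Z3 = (\<lambda>x. u * Z1 x + (1 - u) * Z2 x)"
    have Z3: "Z3 \<in> Q" using assms(11) Z uv unfolding Z3_def by auto
    have "u *\<^sub>R c1 + v *\<^sub>R c2 = cZ Z3"
    proof (subst vec_eq_iff, intro allI)
      fix i
      have "(\<lambda>x. - (Z3 x * (R x $ i - r))) = (\<lambda>x. u * (- (Z1 x * (R x $ i - r))) + v * (- (Z2 x * (R x $ i - r))))"
      proof -
        have vv: "v = 1 - u" using uv by simp
        show ?thesis unfolding Z3_def vv by (auto simp: algebra_simps)
      qed
      then have "integral\<^sup>L M (\<lambda>x. - (Z3 x * (R x $ i - r))) =
          u * integral\<^sup>L M (\<lambda>x. - (Z1 x * (R x $ i - r))) + v * integral\<^sup>L M (\<lambda>x. - (Z2 x * (R x $ i - r)))"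
        using ZD[OF Z(1), of i] ZD[OF Z(2), of i] by simp
      then show "(u *\<^sub>R c1 + v *\<^sub>R c2) $ i = cZ Z3 $ i" unfolding Z cZ_def by simp
    qed
    then show "u *\<^sub>R c1 + v *\<^sub>R c2 \<in> cZ ` Q" using Z3 by auto
  qed
  have rhoeq: "rho M Q (X v) = (SUP c\<in>cZ ` Q. ereal (v \<bullet> c))" for v
    unfolding rho_def image_image using key by (intro SUP_cong) auto
  have inj: "v = 0" if "AE \<omega> in M. X v \<omega> = 0" for v
  proof -
    define \<theta> :: "real^'d" where "\<theta> = (\<chi> i. v$i / S0$i)"
    define \<theta>0 where "\<theta>0 = - (\<theta> \<bullet> S0)"
    have "\<theta>0 * (1 + r) + \<theta> \<bullet> S1 \<omega> = X v \<omega>" for \<omega>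
    proof -
      have "\<theta>0 * (1 + r) + \<theta> \<bullet> S1 \<omega> = (\<Sum>i\<in>UNIV. v$i / S0$i * (S1 \<omega> $ i - (1 + r) * S0 $ i))"
        unfolding \<theta>0_def \<theta>_def inner_vec_def
        apply (simp add: sum_distrib_left sum_distrib_right sum_subtractf[symmetric] algebra_simps)
        apply (intro sum.cong refl)
        apply auto
        done
      also have "\<dots> = (\<Sum>i\<in>UNIV. v$i * (R \<omega> $ i - r))"
        using assms(3) unfolding R_def returns_def
        by (intro sum.cong refl) (simp add: field_simps less_imp_neq[symmetric])
      finally show ?thesis unfolding Xsum by simp
    qed
    then have "AE \<omega> in M. \<theta>0 * (1 + r) + \<theta> \<bullet> S1 \<omega> = 0" using that by simp
    moreover have "\<theta>0 * 1 + \<theta> \<bullet> S0 = 0" unfolding \<theta>0_def by simp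
    ultimately have "\<theta> = 0" using assms(5) unfolding nonredundant_def by blast
    then show "v = 0" using assms(3) unfolding \<theta>_def vec_eq_iff
      by (auto simp: less_imp_neq[symmetric])
  qed
  define N where "N = (\<lambda>v. \<integral>\<omega>. \<bar>X v \<omega>\<bar> \<partial>M)"
  define K where "K = (\<Sum>i\<in>UNIV. \<integral>\<omega>. \<bar>R \<omega> $ i - r\<bar> \<partial>M)"
  have N0: "N v \<ge> 0" for v unfolding N_def by simp
  have K0: "K \<ge> 0" unfolding K_def by (intro sum_nonneg) simp
  have Nle: "N v \<le> K * norm v" for v
  proof -
    have "N v \<le> (\<integral>\<omega>. (\<Sum>i\<in>UNIV. norm v * \<bar>R \<omega> $ i - r\<bar>) \<partial>M)"
      unfolding N_def
    proof (rule Bochner_Integration.integral_mono)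
      show "integrable M (\<lambda>\<omega>. \<bar>X v \<omega>\<bar>)" using Xint by auto
      show "integrable M (\<lambda>\<omega>. \<Sum>i\<in>UNIV. norm v * \<bar>R \<omega> $ i - r\<bar>)"
        using Di by (intro Bochner_Integration.integrable_sum Bochner_Integration.integrable_mult_right integrable_abs) auto
      fix \<omega>
      have "\<bar>X v \<omega>\<bar> \<le> (\<Sum>i\<in>UNIV. \<bar>v$i * (R \<omega> $ i - r)\<bar>)" unfolding Xsum by (rule sum_abs)
      also have "\<dots> \<le> (\<Sum>i\<in>UNIV. norm v * \<bar>R \<omega> $ i - r\<bar>)"
        by (intro sum_mono) (simp add: abs_mult component_le_norm_cart mult_right_mono)
      finally show "\<bar>X v \<omega>\<bar> \<le> (\<Sum>i\<in>UNIV. norm v * \<bar>R \<omega> $ i - r\<bar>)" .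
    qed
    also have "\<dots> = K * norm v" unfolding K_def using Di
      by (subst Bochner_Integration.integral_sum) (auto simp: sum_distrib_left mult.commute)
    finally show ?thesis .
  qed
  have Ndiff: "\<bar>N v - N w\<bar> \<le> N (v - w)" for v w
  proof -
    have a: "N v - N w \<le> N (v - w)" if "True" for v w
    proof -
      have "N v - N w = (\<integral>\<omega>. \<bar>X v \<omega>\<bar> - \<bar>X w \<omega>\<bar> \<partial>M)" unfolding N_def using Xint by simp
      also have "\<dots> \<le> N (v - w)" unfolding N_def
        using Xint by (intro Bochner_Integration.integral_mono) (auto simp: er_diff[symmetric] X_def)
      finally show ?thesis .
    qed
    have "N (w - v) = N (v - w)" unfolding N_def
      by (metis (no_types) X_def er_diff abs_minus_commute)
    then show ?thesis using a[of v w] a[of w v] by auto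
  qed
  have Ncont: "continuous_on UNIV N"
    unfolding continuous_on_iff
  proof (intro ballI allI impI)
    fix x :: "real^'d" and e :: real assume e: "e > 0"
    show "\<exists>d>0. \<forall>x'\<in>UNIV. dist x' x < d \<longrightarrow> dist (N x') (N x) < e"
    proof (intro exI[of _ "e / (K + 1)"] conjI ballI impI)
      show "e / (K + 1) > 0" using e K0 by simp
      fix x' assume "dist x' x < e / (K + 1)"
      then have h: "norm (x' - x) * (K + 1) < e" using K0 by (simp add: dist_norm field_simps)
      have "dist (N x') (N x) \<le> K * norm (x' - x)" using Ndiff[of x' x] Nle[of "x' - x"]
        by (simp add: dist_real_def)
      also have "\<dots> \<le> norm (x' - x) * (K + 1)" by (simp add: algebra_simps)
      finally show "dist (N x') (N x) < e" using h by simp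
    qed
  qed
  obtain v0 where v0: "v0 \<in> sphere 0 1" "\<And>y. y \<in> sphere 0 1 \<Longrightarrow> N v0 \<le> N y"
    using continuous_attains_inf[OF compact_sphere _ continuous_on_subset[OF Ncont]]
    by (metis sphere_eq_empty not_less zero_le_one subset_UNIV)
  define m where "m = N v0"
  have m0: "m > 0"
  proof (rule ccontr)
    assume "\<not> m > 0"
    then have "N v0 = 0" using N0[of v0] m_def by simp
    then have "AE \<omega> in M. \<bar>X v0 \<omega>\<bar> = 0" unfolding N_def
      using integral_nonneg_eq_0_iff_AE[of M "\<lambda>\<omega>. \<bar>X v0 \<omega>\<bar>"] Xint by auto
    then have "v0 = 0" by (intro inj) simp
    then show False using v0(1) by simp
  qed
  have Nlow: "m * norm v \<le> N v" for v
  proof (cases "v = 0")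
    case True then show ?thesis using N0 by simp
  next
    case False
    define u where "u = (1 / norm v) *\<^sub>R v"
    have "u \<in> sphere 0 1" using False unfolding u_def by simp
    then have "m \<le> N u" using v0 m_def by simp
    also have "N u = N v / norm v" unfolding N_def u_def X_def er_scale
      by (simp add: abs_mult integral_mult_left_zero)
    finally show ?thesis using False by (simp add: field_simps)
  qed
  have fatou: "rho M Q (X \<pi>) \<le> liminf (\<lambda>n. rho M Q (X (\<pi>s n)))"
    if Y: "Y \<in> L" and conv_ae: "AE \<omega> in M. (\<lambda>n. X (\<pi>s n) \<omega>) \<longlonglongrightarrow> X \<pi> \<omega>"
      and bnd: "\<forall>n. AE \<omega> in M. \<bar>X (\<pi>s n) \<omega>\<bar> \<le> Y \<omega>" for \<pi>s \<pi> Y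
  proof -
    have Yint: "integrable M Y" using Y assms(8) unfolding riesz_between_Linf_L1_def by auto
    have bndall: "AE \<omega> in M. \<forall>n. \<bar>X (\<pi>s n) \<omega>\<bar> \<le> Y \<omega>" using bnd by (simp add: AE_all_countable)
    have bndlim: "AE \<omega> in M. \<bar>X \<pi> \<omega>\<bar> \<le> Y \<omega>"
      using bndall conv_ae
    proof eventually_elim
      case (elim \<omega>)
      show ?case using elim(1) tendsto_rabs[OF elim(2)]
        by (intro LIMSEQ_le_const2) auto
    qed
    have "(\<lambda>n. \<integral>\<omega>. \<bar>X (\<pi>s n) \<omega> - X \<pi> \<omega>\<bar> \<partial>M) \<longlonglongrightarrow> integral\<^sup>L M (\<lambda>_. 0)"
    proof (rule integral_dominated_convergence[where w = "\<lambda>\<omega>. 2 * Y \<omega>"])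
      show "(\<lambda>_. 0::real) \<in> borel_measurable M" by simp
      show "(\<lambda>\<omega>. \<bar>X (\<pi>s n) \<omega> - X \<pi> \<omega>\<bar>) \<in> borel_measurable M" for n using Xmeas by auto
      show "integrable M (\<lambda>\<omega>. 2 * Y \<omega>)" using Yint by simp
      show "AE \<omega> in M. (\<lambda>n. \<bar>X (\<pi>s n) \<omega> - X \<pi> \<omega>\<bar>) \<longlonglongrightarrow> 0"
        using conv_ae
      proof eventually_elim
        case (elim \<omega>)
        have "(\<lambda>n. \<bar>X (\<pi>s n) \<omega> - X \<pi> \<omega>\<bar>) \<longlonglongrightarrow> \<bar>X \<pi> \<omega> - X \<pi> \<omega>\<bar>"
          by (intro tendsto_intros elim)
        then show ?case by simp
      qed
      show "AE \<omega> in M. norm \<bar>X (\<pi>s n) \<omega> - X \<pi> \<omega>\<bar> \<le> 2 * Y \<omega>" for n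
        using bnd[rule_format, of n] bndlim by eventually_elim auto
    qed
    then have NL: "(\<lambda>n. N (\<pi>s n - \<pi>)) \<longlonglongrightarrow> 0"
      unfolding N_def X_def er_diff[symmetric] by simp
    have "(\<lambda>n. \<pi>s n - \<pi>) \<longlonglongrightarrow> 0"
    proof (rule Lim_null_comparison)
      show "\<forall>\<^sub>F n in sequentially. norm (\<pi>s n - \<pi>) \<le> N (\<pi>s n - \<pi>) / m"
        using Nlow m0 by (auto simp: field_simps mult.commute)
      show "(\<lambda>n. N (\<pi>s n - \<pi>) / m) \<longlonglongrightarrow> 0" using tendsto_divide[OF NL tendsto_const, of m] m0 by simp
    qed
    then have pilim: "\<pi>s \<longlonglongrightarrow> \<pi>" by (rule LIM_zero_cancel)
    show ?thesis
      unfolding rhoeq[of \<pi>]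
    proof (rule SUP_least)
      fix c assume c: "c \<in> cZ ` Q"
      have hl: "(\<lambda>n. ereal (\<pi>s n \<bullet> c)) \<longlonglongrightarrow> ereal (\<pi> \<bullet> c)"
        by (intro tendsto_intros pilim)
      have "ereal (\<pi> \<bullet> c) = liminf (\<lambda>n. ereal (\<pi>s n \<bullet> c))"
        using lim_imp_Liminf[OF _ hl] by simp
      also have "\<dots> \<le> liminf (\<lambda>n. rho M Q (X (\<pi>s n)))"
        unfolding rhoeq using c by (intro Liminf_mono always_eventually allI SUP_upper)
      finally show "ereal (\<pi> \<bullet> c) \<le> liminf (\<lambda>n. rho M Q (X (\<pi>s n)))" .
    qed
  qed
  show ?thesis
    using conv rhoeq fatou unfolding Cdef[symmetric] X_def R_def by blast
qed

end
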